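(* Let $M,N,K\ge 1$ be integers, $\mathcal K=\{1,\dots,K\}$, $\mathbf G\in\mathbb C^{N\times M}$, $\mathbf h_1,\dots,\mathbf h_K\in\mathbb C^{M}$, $P_0>0$, and for each $k\in\mathcal K$ let $\Gamma_k>0$ and $\sigma_k^2>0$. Write $\mathbf H_k=\mathbf h_k\mathbf h_k^H$. For a positive semidefinite $\mathbf R\in\mathbb C^{M\times M}$ let $f(\mathbf R)=\mathrm{tr}\big((\mathbf G\mathbf R\mathbf G^H)^{-1}\big)$ when $\mathbf G\mathbf R\mathbf G^H$ is invertible, and $f(\mathbf R)=+\infty$ otherwise. Consider the problems: (P1.1): minimize $f\big(\sum_{k\in\mathcal K}\mathbf w_k\mathbf w_k^H+\mathbf R_0\big)$ over $\mathbf w_1,\dots,\mathbf w_K\in\mathbb C^M$ and Hermitian $\mathbf R_0\in\mathbb C^{M\times M}$, subject to $\frac{|\mathbf h_k^H\mathbf w_k|^2}{\sum_{i\in\mathcal K,i\ne k}|\mathbf h_k^H\mathbf w_i|^2+\mathbf h_k^H\mathbf R_0\mathbf h_k+\sigma_k^2}\ge\Gamma_k$ for all $k\in\mathcal K$, $\sum_{k\in\mathcal K}\|\mathbf w_k\|^2+\mathrm{tr}(\mathbf R_0)\le P_0$, and $\mathbf R_0\succeq\mathbf 0$; (P1.2): minimize $f\big(\sum_{k\in\mathcal K}\mathbf W_k+\mathbf R_0\big)$ over Hermitian $\mathbf W_1,\dots,\mathbf W_K,\mathbf R_0\in\mathbb C^{M\times M}$, subject to $\frac{1}{\Gamma_k}\mathrm{tr}(\mathbf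 H_k\mathbf W_k)-\sum_{i\in\mathcal K,i\ne k}\mathrm{tr}(\mathbf H_k\mathbf W_i)-\mathrm{tr}(\mathbf H_k\mathbf R_0)\ge\sigma_k^2$ for all $k\in\mathcal K$, $\sum_{k\in\mathcal K}\mathrm{tr}(\mathbf W_k)+\mathrm{tr}(\mathbf R_0)\le P_0$, $\mathbf R_0\succeq\mathbf 0$, $\mathbf W_k\succeq\mathbf 0$ and $\mathrm{rank}(\mathbf W_k)\le 1$ for all $k\in\mathcal K$; (SDR1.2): the same as (P1.2) but without the constraints $\mathrm{rank}(\mathbf W_k)\le1$. Then (P1.1), (P1.2) and (SDR1.2) have the same optimal value. Moreover, if $\{\tilde{\mathbf W}_k\}_{k\in\mathcal K},\tilde{\mathbf R}_0$ is an optimal solution of (SDR1.2), then $\mathbf w_k^\star=(\mathbf h_k^H\tilde{\mathbf W}_k\mathbf h_k)^{-1/2}\tilde{\mathbf W}_k\mathbf h_k$ for $k\in\mathcal K$ and $\mathbf R_0^\star=\tilde{\mathbf R}_0+\sum_{k\in\mathcal K}\tilde{\mathbf W}_k-\sum_{k\in\mathcal K}\mathbf w_k^\star(\mathbf w_k^\star)^H$ form an optimal solution of (P1.1).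
   Context: This is the transmit beamforming subproblem of an IRS-enabled integrated sensing and communication system with a fixed IRS reflection vector: $\mathbf h_k$ is the combined channel from the base station ($M$ antennas) to user $k$, $\mathbf w_k$ the information beamformer for user $k$, $\mathbf R_0$ the covariance matrix of the dedicated sensing signal, $\mathbf G$ the base-station-to-IRS channel, $\Gamma_k$ the SINR threshold, $\sigma_k^2$ the noise variance, and $P_0$ the power budget. The objective is (up to a positive constant) the Cramér-Rao bound for estimating the target response matrix. Here users cannot cancel sensing-signal interference, hence the term $\mathbf h_k^H\mathbf R_0\mathbf h_k$ in the SINR. *)

theory Defs
  imports "Jordan_Normal_Form.DL_Rank" "HOL-Library.Extended_Real"
begin

text \<open>Complex matrices/vectors are Jordan_Normal_Form matrices with explicit dimensions.
  Users are indexed by 0..<K (the paper's 1..K).\<close>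

definition ctrans :: "complex mat \<Rightarrow> complex mat" where
  "ctrans A = transpose_mat (map_mat cnj A)"

definition mtrace :: "complex mat \<Rightarrow> complex" where
  "mtrace A = (\<Sum>i<dim_row A. A $$ (i,i))"

definition cinner :: "complex vec \<Rightarrow> complex vec \<Rightarrow> complex" where
  "cinner x y = (\<Sum>i<dim_vec x. cnj (x $ i) * y $ i)"

definition outer :: "complex vec \<Rightarrow> complex mat" where
  "outer x = mat (dim_vec x) (dim_vec x) (\<lambda>(i,j). x $ i * cnj (x $ j))"

definition vnorm2 :: "complex vec \<Rightarrow> real" where
  "vnorm2 x = (\<Sum>i<dim_vec x. (cmod (x $ i))\<^sup>2)"

definition hermitian :: "nat \<Rightarrow> complex mat \<Rightarrow> bool" where
  "hermitian n A \<longleftrightarrow> A \<in> carrier_mat n n \<and> ctrans A = A"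

definition psd :: "nat \<Rightarrow> complex mat \<Rightarrow> bool" where
  "psd n A \<longleftrightarrow> hermitian n A \<and> (\<forall>x\<in>carrier_vec n. 0 \<le> Re (cinner x (A *\<^sub>v x)))"

definition msum :: "nat \<Rightarrow> nat \<Rightarrow> (nat \<Rightarrow> complex mat) \<Rightarrow> complex mat" where
  "msum n K W = mat n n (\<lambda>(i,j). \<Sum>k<K. W k $$ (i,j))"

text \<open>f(R) = tr((G R G^H)^{-1}) if invertible, +infinity otherwise.
  (For Hermitian invertible G R G^H the trace of the inverse is real; we take its real part.)\<close>
definition crb :: "complex mat \<Rightarrow> complex mat \<Rightarrow> ereal" where
  "crb G R = (case mat_inverse (G * R * ctrans G) of
                None \<Rightarrow> \<infinity>
              | Some B \<Rightarrow> ereal (Re (mtrace B)))"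

definition obj11 :: "nat \<Rightarrow> nat \<Rightarrow> complex mat \<Rightarrow> (nat \<Rightarrow> complex vec) \<Rightarrow> complex mat \<Rightarrow> ereal" where
  "obj11 M K G w R0 = crb G (msum M K (\<lambda>k. outer (w k)) + R0)"

definition feas11 :: "nat \<Rightarrow> nat \<Rightarrow> (nat \<Rightarrow> complex vec) \<Rightarrow> (nat \<Rightarrow> real) \<Rightarrow> (nat \<Rightarrow> real) \<Rightarrow> real
    \<Rightarrow> (nat \<Rightarrow> complex vec) \<Rightarrow> complex mat \<Rightarrow> bool" where
  "feas11 M K h \<Gamma> \<sigma>2 P0 w R0 \<longleftrightarrow>
     (\<forall>k<K. w k \<in> carrier_vec M) \<and> hermitian M R0 \<and>
     (\<forall>k<K. (cmod (cinner (h k) (w k)))\<^sup>2 /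
        ((\<Sum>i\<in>{..<K} - {k}. (cmod (cinner (h k) (w i)))\<^sup>2) + Re (cinner (h k) (R0 *\<^sub>v h k)) + \<sigma>2 k)
        \<ge> \<Gamma> k) \<and>
     (\<Sum>k<K. vnorm2 (w k)) + Re (mtrace R0) \<le> P0 \<and>
     psd M R0"

definition val11 :: "nat \<Rightarrow> nat \<Rightarrow> complex mat \<Rightarrow> (nat \<Rightarrow> complex vec) \<Rightarrow> (nat \<Rightarrow> real) \<Rightarrow> (nat \<Rightarrow> real)
    \<Rightarrow> real \<Rightarrow> ereal" where
  "val11 M K G h \<Gamma> \<sigma>2 P0 =
     (INF p \<in> {(w, R0). feas11 M K h \<Gamma> \<sigma>2 P0 w R0}. obj11 M K G (fst p) (snd p))"

definition obj12 :: "nat \<Rightarrow> nat \<Rightarrow> complex mat \<Rightarrow> (nat \<Rightarrow> complex mat) \<Rightarrow> complex mat \<Rightarrow> ereal" where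
  "obj12 M K G W R0 = crb G (msum M K W + R0)"

definition feasSDR :: "nat \<Rightarrow> nat \<Rightarrow> (nat \<Rightarrow> complex vec) \<Rightarrow> (nat \<Rightarrow> real) \<Rightarrow> (nat \<Rightarrow> real) \<Rightarrow> real
    \<Rightarrow> (nat \<Rightarrow> complex mat) \<Rightarrow> complex mat \<Rightarrow> bool" where
  "feasSDR M K h \<Gamma> \<sigma>2 P0 W R0 \<longleftrightarrow>
     (\<forall>k<K. hermitian M (W k)) \<and> hermitian M R0 \<and>
     (\<forall>k<K. Re (mtrace (outer (h k) * W k)) / \<Gamma> k
              - (\<Sum>i\<in>{..<K} - {k}. Re (mtrace (outer (h k) * W i)))
              - Re (mtrace (outer (h k) * R0)) \<ge> \<sigma>2 k) \<and>
     (\<Sum>k<K. Re (mtrace (W k))) + Re (mtrace R0) \<le> P0 \<and>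
     psd M R0 \<and> (\<forall>k<K. psd M (W k))"

definition feas12 :: "nat \<Rightarrow> nat \<Rightarrow> (nat \<Rightarrow> complex vec) \<Rightarrow> (nat \<Rightarrow> real) \<Rightarrow> (nat \<Rightarrow> real) \<Rightarrow> real
    \<Rightarrow> (nat \<Rightarrow> complex mat) \<Rightarrow> complex mat \<Rightarrow> bool" where
  "feas12 M K h \<Gamma> \<sigma>2 P0 W R0 \<longleftrightarrow>
     feasSDR M K h \<Gamma> \<sigma>2 P0 W R0 \<and> (\<forall>k<K. vec_space.rank M (W k) \<le> 1)"

definition val12 :: "nat \<Rightarrow> nat \<Rightarrow> complex mat \<Rightarrow> (nat \<Rightarrow> complex vec) \<Rightarrow> (nat \<Rightarrow> real) \<Rightarrow> (nat \<Rightarrow> real)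
    \<Rightarrow> real \<Rightarrow> ereal" where
  "val12 M K G h \<Gamma> \<sigma>2 P0 =
     (INF p \<in> {(W, R0). feas12 M K h \<Gamma> \<sigma>2 P0 W R0}. obj12 M K G (fst p) (snd p))"

definition valSDR :: "nat \<Rightarrow> nat \<Rightarrow> complex mat \<Rightarrow> (nat \<Rightarrow> complex vec) \<Rightarrow> (nat \<Rightarrow> real) \<Rightarrow> (nat \<Rightarrow> real)
    \<Rightarrow> real \<Rightarrow> ereal" where
  "valSDR M K G h \<Gamma> \<sigma>2 P0 =
     (INF p \<in> {(W, R0). feasSDR M K h \<Gamma> \<sigma>2 P0 W R0}. obj12 M K G (fst p) (snd p))"

end

theory Submission
  imports Defs
begin

lemma mult_mat_vec_idx:
  assumes "A \<in> carrier_mat n n" "y \<in> carrier_vec n" "i < n"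
  shows "(A *\<^sub>v y) $ i = (\<Sum>j<n. A$$(i,j) * y$j)"
proof -
  have "(A *\<^sub>v y) $ i = row A i \<bullet> y" using assms by simp
  also have "\<dots> = (\<Sum>j\<in>{0..<n}. row A i $ j * y $ j)" using assms by (simp add: scalar_prod_def)
  also have "\<dots> = (\<Sum>j<n. A$$(i,j) * y$j)" using assms by (simp add: atLeast0LessThan)
  finally show ?thesis .
qed

lemma qf_idx:
  assumes "A \<in> carrier_mat n n" "x \<in> carrier_vec n" "y \<in> carrier_vec n"
  shows "cinner x (A *\<^sub>v y) = (\<Sum>i<n. \<Sum>j<n. cnj (x$i) * A$$(i,j) * y$j)"
proof -
  have "cinner x (A *\<^sub>v y) = (\<Sum>i<n. cnj (x$i) * (A *\<^sub>v y) $ i)" using assms by (simp add: cinner_def)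
  also have "\<dots> = (\<Sum>i<n. cnj (x$i) * (\<Sum>j<n. A$$(i,j) * y$j))"
    using assms by (intro sum.cong refl) (simp add: mult_mat_vec_idx del: index_mult_mat_vec)
  also have "\<dots> = (\<Sum>i<n. \<Sum>j<n. cnj (x$i) * A$$(i,j) * y$j)"
    by (simp add: sum_distrib_left mult.assoc)
  finally show ?thesis .
qed

lemma herm_iff:
  "hermitian n A \<longleftrightarrow> A \<in> carrier_mat n n \<and> (\<forall>i<n. \<forall>j<n. A$$(j,i) = cnj(A$$(i,j)))"
proof
  assume "hermitian n A"
  then have A: "A \<in> carrier_mat n n" and e: "ctrans A = A" by (auto simp: hermitian_def)
  have "\<forall>i<n. \<forall>j<n. A$$(j,i) = cnj(A$$(i,j))"
  proof (intro allI impI)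
    fix i j assume "i<n" "j<n"
    then have "ctrans A $$ (j,i) = cnj (A$$(i,j))" using A by (simp add: ctrans_def)
    then show "A$$(j,i) = cnj(A$$(i,j))" using e by simp
  qed
  with A show "A \<in> carrier_mat n n \<and> (\<forall>i<n. \<forall>j<n. A$$(j,i) = cnj(A$$(i,j)))" by blast
next
  assume h: "A \<in> carrier_mat n n \<and> (\<forall>i<n. \<forall>j<n. A$$(j,i) = cnj(A$$(i,j)))"
  then have A: "A \<in> carrier_mat n n" by blast
  have "ctrans A = A"
  proof (rule eq_matI)
    fix i j assume ij: "i < dim_row A" "j < dim_col A"
    then have "ctrans A $$ (i,j) = cnj (A $$ (j,i))" using A by (simp add: ctrans_def)
    also have "\<dots> = A $$ (i,j)" using h ij A by (metis carrier_matD)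
    finally show "ctrans A $$ (i,j) = A $$ (i,j)" .
  qed (use A in \<open>simp_all add: ctrans_def\<close>)
  then show "hermitian n A" using A by (simp add: hermitian_def)
qed
lemma herm_sym:
  assumes "hermitian n A" "x \<in> carrier_vec n" "y \<in> carrier_vec n"
  shows "cinner x (A *\<^sub>v y) = cnj (cinner y (A *\<^sub>v x))"
proof -
  have A: "A \<in> carrier_mat n n" and s: "\<And>i j. i<n \<Longrightarrow> j<n \<Longrightarrow> cnj (A$$(i,j)) = A$$(j,i)"
    using assms(1) unfolding herm_iff by (metis complex_cnj_cnj)+
  have "cnj (cinner y (A *\<^sub>v x)) = (\<Sum>i<n. \<Sum>j<n. y$i * cnj (A$$(i,j)) * cnj (x$j))"
    using qf_idx[OF A assms(3,2)] by (simp add: cnj_sum)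
  also have "\<dots> = (\<Sum>i<n. \<Sum>j<n. cnj (x$j) * A$$(j,i) * y$i)"
    using s by (auto intro!: sum.cong)
  also have "\<dots> = (\<Sum>j<n. \<Sum>i<n. cnj (x$j) * A$$(j,i) * y$i)"
    by (rule sum.swap)
  also have "\<dots> = cinner x (A *\<^sub>v y)" using qf_idx[OF A assms(2,3)] by simp
  finally show ?thesis by simp
qed

lemma herm_real:
  assumes "hermitian n A" "x \<in> carrier_vec n"
  shows "cinner x (A *\<^sub>v x) = complex_of_real (Re (cinner x (A *\<^sub>v x)))"
proof -
  have e: "cinner x (A *\<^sub>v x) = cnj (cinner x (A *\<^sub>v x))" by (rule herm_sym[OF assms assms(2)])
  have "Im (cinner x (A *\<^sub>v x)) = Im (cnj (cinner x (A *\<^sub>v x)))" using e by (rule arg_cong)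
  then have "Im (cinner x (A *\<^sub>v x)) = 0" by simp
  then show ?thesis by (simp add: complex_eq_iff)
qed

lemma cinner_add_left: "x \<in> carrier_vec n \<Longrightarrow> y \<in> carrier_vec n \<Longrightarrow> z \<in> carrier_vec n \<Longrightarrow>
  cinner (x + y) z = cinner x z + cinner y z"
  by (simp add: cinner_def sum.distrib distrib_right)

lemma cinner_minus_left: "x \<in> carrier_vec n \<Longrightarrow> y \<in> carrier_vec n \<Longrightarrow> z \<in> carrier_vec n \<Longrightarrow>
  cinner (x - y) z = cinner x z - cinner y z"
  by (simp add: cinner_def sum_subtractf left_diff_distrib)

lemma cinner_smult_left: "cinner (c \<cdot>\<^sub>v x) z = cnj c * cinner x z"
  by (simp add: cinner_def sum_distrib_left mult.assoc)

lemma cinner_add_right: "x \<in> carrier_vec n \<Longrightarrow> y \<in> carrier_vec n \<Longrightarrow> z \<in> carrier_vec n \<Longrightarrow>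
  cinner z (x + y) = cinner z x + cinner z y"
  by (simp add: cinner_def sum.distrib distrib_left)

lemma cinner_minus_right: "x \<in> carrier_vec n \<Longrightarrow> y \<in> carrier_vec n \<Longrightarrow> z \<in> carrier_vec n \<Longrightarrow>
  cinner z (x - y) = cinner z x - cinner z y"
  by (simp add: cinner_def sum_subtractf right_diff_distrib)

lemma cinner_smult_right: "x \<in> carrier_vec n \<Longrightarrow> z \<in> carrier_vec n \<Longrightarrow> cinner z (c \<cdot>\<^sub>v x) = c * cinner z x"
  by (simp add: cinner_def sum_distrib_left mult.left_commute)

lemma cinner_self: "cinner x x = complex_of_real (vnorm2 x)"
  by (simp add: cinner_def vnorm2_def complex_norm_square mult.commute del: of_real_power)

lemma outer_carrier: "x \<in> carrier_vec n \<Longrightarrow> outer x \<in> carrier_mat n n"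
  by (simp add: outer_def)

lemma outer_mult_vec: assumes "w \<in> carrier_vec n" "x \<in> carrier_vec n"
  shows "outer w *\<^sub>v x = cnj (cinner x w) \<cdot>\<^sub>v w"
proof (rule eq_vecI)
  show "dim_vec (outer w *\<^sub>v x) = dim_vec (cnj (cinner x w) \<cdot>\<^sub>v w)" using assms by (simp add: outer_def)
  fix i assume "i < dim_vec (cnj (cinner x w) \<cdot>\<^sub>v w)"
  then have i: "i < n" using assms by simp
  have O: "outer w \<in> carrier_mat n n" using assms by (simp add: outer_def)
  have "(outer w *\<^sub>v x)$i = (\<Sum>j<n. outer w $$ (i,j) * x$j)" by (rule mult_mat_vec_idx[OF O assms(2) i])
  also have "\<dots> = (\<Sum>j<n. w$i * (cnj (w$j) * x$j))" using assms i by (simp add: outer_def mult.assoc)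
  also have "\<dots> = w$i * cnj (cinner x w)" using assms
    by (simp add: cinner_def cnj_sum sum_distrib_left mult_ac)
  finally show "(outer w *\<^sub>v x)$i = (cnj (cinner x w) \<cdot>\<^sub>v w) $ i" using assms i by (simp add: mult.commute)
qed

lemma qf_outer: assumes "w \<in> carrier_vec n" "x \<in> carrier_vec n"
  shows "cinner x (outer w *\<^sub>v x) = complex_of_real ((cmod (cinner x w))\<^sup>2)"
  using assms by (simp add: outer_mult_vec cinner_smult_right complex_norm_square mult.commute del: of_real_power)

lemma herm_outer: "w \<in> carrier_vec n \<Longrightarrow> hermitian n (outer w)"
  by (auto simp: herm_iff outer_def)

lemma psd_outer: "w \<in> carrier_vec n \<Longrightarrow> psd n (outer w)"
  by (auto simp: psd_def herm_outer qf_outer)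

lemma CS:
  assumes "psd n W" "x \<in> carrier_vec n" "y \<in> carrier_vec n"
    and a: "Re (cinner y (W *\<^sub>v y)) > 0"
  shows "(cmod (cinner y (W *\<^sub>v x)))\<^sup>2 \<le> Re (cinner x (W *\<^sub>v x)) * Re (cinner y (W *\<^sub>v y))"
proof -
  have H: "hermitian n W" and W: "W \<in> carrier_mat n n" using assms(1) by (auto simp: psd_def hermitian_def)
  define a where "a = Re (cinner y (W *\<^sub>v y))"
  define b where "b = cinner y (W *\<^sub>v x)"
  define t where "t = b / complex_of_real a"
  have yy: "cinner y (W *\<^sub>v y) = complex_of_real a" unfolding a_def by (rule herm_real[OF H assms(3)])
  have xy: "cinner x (W *\<^sub>v y) = cnj b" unfolding b_def by (rule herm_sym[OF H assms(2,3)])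
  have z: "x - t \<cdot>\<^sub>v y \<in> carrier_vec n" using assms by simp
  have Wz: "W *\<^sub>v (x - t \<cdot>\<^sub>v y) = W *\<^sub>v x - t \<cdot>\<^sub>v (W *\<^sub>v y)"
    using W assms by (simp add: mult_minus_distrib_mat_vec mult_mat_vec)
  have Wx: "W *\<^sub>v x \<in> carrier_vec n" "W *\<^sub>v y \<in> carrier_vec n" using W assms by auto
  have "cinner (x - t \<cdot>\<^sub>v y) (W *\<^sub>v (x - t \<cdot>\<^sub>v y))
     = cinner x (W *\<^sub>v x) - t * cnj b - cnj t * (b - t * complex_of_real a)"
    unfolding Wz using assms Wx
    by (simp add: cinner_minus_left[of _ n] cinner_minus_right[of _ n] cinner_smult_left
      cinner_smult_right[of _ n] yy xy flip: b_def) (simp add: algebra_simps)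
  also have "t * complex_of_real a = b" using a unfolding t_def a_def by simp
  finally have e: "cinner (x - t \<cdot>\<^sub>v y) (W *\<^sub>v (x - t \<cdot>\<^sub>v y)) = cinner x (W *\<^sub>v x) - b * cnj b / complex_of_real a"
    unfolding t_def by simp
  have "0 \<le> Re (cinner (x - t \<cdot>\<^sub>v y) (W *\<^sub>v (x - t \<cdot>\<^sub>v y)))" using assms(1) z by (auto simp: psd_def)
  also have "Re (b * cnj b / complex_of_real a) = (cmod b)\<^sup>2 / a"
    by (simp add: complex_mult_cnj cmod_power2 del: of_real_power)
  then have "Re (cinner (x - t \<cdot>\<^sub>v y) (W *\<^sub>v (x - t \<cdot>\<^sub>v y))) = Re (cinner x (W *\<^sub>v x)) - (cmod b)\<^sup>2 / a"
    unfolding e by simp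
  finally have "(cmod b)\<^sup>2 / a \<le> Re (cinner x (W *\<^sub>v x))" by simp
  then show ?thesis using a unfolding b_def a_def by (simp add: divide_le_eq mult.commute)
qed


lemma qf_add: assumes "A \<in> carrier_mat n n" "B \<in> carrier_mat n n" "x \<in> carrier_vec n"
  shows "cinner x ((A + B) *\<^sub>v x) = cinner x (A *\<^sub>v x) + cinner x (B *\<^sub>v x)"
  using assms by (simp add: add_mult_distrib_mat_vec cinner_add_right[of _ n])

lemma qf_minus: assumes "A \<in> carrier_mat n n" "B \<in> carrier_mat n n" "x \<in> carrier_vec n"
  shows "cinner x ((A - B) *\<^sub>v x) = cinner x (A *\<^sub>v x) - cinner x (B *\<^sub>v x)"
  using assms by (simp add: minus_mult_distrib_mat_vec cinner_minus_right[of _ n])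

lemma msum_carrier: "msum n K W \<in> carrier_mat n n"
  by (simp add: msum_def)

lemma qf_msum: assumes "\<And>k. k < K \<Longrightarrow> W k \<in> carrier_mat n n" "x \<in> carrier_vec n"
  shows "cinner x (msum n K W *\<^sub>v x) = (\<Sum>k<K. cinner x (W k *\<^sub>v x))"
proof -
  have "cinner x (msum n K W *\<^sub>v x) = (\<Sum>i<n. \<Sum>j<n. cnj (x$i) * msum n K W $$ (i,j) * x$j)"
    by (rule qf_idx[OF msum_carrier assms(2) assms(2)])
  also have "\<dots> = (\<Sum>i<n. \<Sum>j<n. \<Sum>k<K. cnj (x$i) * W k $$ (i,j) * x$j)"
    by (intro sum.cong refl) (simp add: msum_def sum_distrib_left sum_distrib_right)
  also have "\<dots> = (\<Sum>i<n. \<Sum>k<K. \<Sum>j<n. cnj (x$i) * W k $$ (i,j) * x$j)"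
    by (intro sum.cong refl sum.swap)
  also have "\<dots> = (\<Sum>k<K. \<Sum>i<n. \<Sum>j<n. cnj (x$i) * W k $$ (i,j) * x$j)"
    by (rule sum.swap)
  also have "\<dots> = (\<Sum>k<K. cinner x (W k *\<^sub>v x))"
  proof (intro sum.cong refl)
    fix k assume "k \<in> {..<K}"
    then show "(\<Sum>i<n. \<Sum>j<n. cnj (x$i) * W k $$ (i,j) * x$j) = cinner x (W k *\<^sub>v x)"
      using qf_idx[OF assms(1) assms(2) assms(2), of k] by simp
  qed
  finally show ?thesis .
qed

lemma mtrace_add: "A \<in> carrier_mat n n \<Longrightarrow> B \<in> carrier_mat n n \<Longrightarrow> mtrace (A + B) = mtrace A + mtrace B"
  by (simp add: mtrace_def sum.distrib)

lemma mtrace_minus: "A \<in> carrier_mat n n \<Longrightarrow> B \<in> carrier_mat n n \<Longrightarrow> mtrace (A - B) = mtrace A - mtrace B"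
  by (simp add: mtrace_def sum_subtractf)

lemma mtrace_msum: assumes "\<And>k. k < K \<Longrightarrow> W k \<in> carrier_mat n n"
  shows "mtrace (msum n K W) = (\<Sum>k<K. mtrace (W k))"
proof -
  have "mtrace (msum n K W) = (\<Sum>i<n. \<Sum>k<K. W k $$ (i,i))" by (simp add: mtrace_def msum_def)
  also have "\<dots> = (\<Sum>k<K. \<Sum>i<n. W k $$ (i,i))" by (rule sum.swap)
  also have "\<dots> = (\<Sum>k<K. mtrace (W k))"
  proof (intro sum.cong refl)
    fix k assume "k \<in> {..<K}"
    then have "dim_row (W k) = n" using assms by auto
    then show "(\<Sum>i<n. W k $$ (i,i)) = mtrace (W k)" by (simp add: mtrace_def)
  qed
  finally show ?thesis .
qed

lemma mtrace_outer: "mtrace (outer w) = complex_of_real (vnorm2 w)"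
  by (simp add: mtrace_def outer_def vnorm2_def complex_norm_square del: of_real_power)

lemma mtrace_outer_mult: assumes "h \<in> carrier_vec n" "W \<in> carrier_mat n n"
  shows "mtrace (outer h * W) = cinner h (W *\<^sub>v h)"
proof -
  have "mtrace (outer h * W) = (\<Sum>i<n. (outer h * W) $$ (i,i))" using assms by (simp add: mtrace_def outer_def)
  also have "\<dots> = (\<Sum>i<n. \<Sum>j<n. h$i * cnj (h$j) * W $$ (j,i))"
  proof (intro sum.cong refl)
    fix i assume "i \<in> {..<n}"
    then show "(outer h * W) $$ (i,i) = (\<Sum>j<n. h$i * cnj (h$j) * W $$ (j,i))"
      using assms by (simp add: outer_def scalar_prod_def atLeast0LessThan)
  qed
  also have "\<dots> = (\<Sum>j<n. \<Sum>i<n. cnj (h$j) * W $$ (j,i) * h$i)"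
    by (subst sum.swap) (simp add: mult_ac)
  also have "\<dots> = cinner h (W *\<^sub>v h)" using qf_idx[OF assms(2) assms(1) assms(1)] by simp
  finally show ?thesis .
qed

lemma herm_carrier: "hermitian n A \<Longrightarrow> A \<in> carrier_mat n n"
  by (simp add: hermitian_def)

lemma herm_add: assumes "hermitian n A" "hermitian n B" shows "hermitian n (A + B)"
proof -
  have A: "A \<in> carrier_mat n n" and B: "B \<in> carrier_mat n n" using assms herm_carrier by auto
  have "\<forall>i<n. \<forall>j<n. (A + B)$$(j,i) = cnj((A + B)$$(i,j))"
  proof (intro allI impI)
    fix i j assume ij: "i<n" "j<n"
    have a: "A$$(j,i) = cnj(A$$(i,j))" and b: "B$$(j,i) = cnj(B$$(i,j))"
      using assms ij unfolding herm_iff by blast+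
    show "(A + B)$$(j,i) = cnj((A + B)$$(i,j))" using A B ij a b by simp
  qed
  then show ?thesis using A B unfolding herm_iff by (simp add: minus_carrier_mat)
qed

lemma herm_minus: assumes "hermitian n A" "hermitian n B" shows "hermitian n (A - B)"
proof -
  have A: "A \<in> carrier_mat n n" and B: "B \<in> carrier_mat n n" using assms herm_carrier by auto
  have "\<forall>i<n. \<forall>j<n. (A - B)$$(j,i) = cnj((A - B)$$(i,j))"
  proof (intro allI impI)
    fix i j assume ij: "i<n" "j<n"
    have a: "A$$(j,i) = cnj(A$$(i,j))" and b: "B$$(j,i) = cnj(B$$(i,j))"
      using assms ij unfolding herm_iff by blast+
    show "(A - B)$$(j,i) = cnj((A - B)$$(i,j))" using A B ij a b by (simp add: minus_carrier_mat)
  qed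
  then show ?thesis using A B unfolding herm_iff by (simp add: minus_carrier_mat)
qed

lemma herm_msum: assumes "\<And>k. k < K \<Longrightarrow> hermitian n (W k)" shows "hermitian n (msum n K W)"
proof -
  have "\<forall>i<n. \<forall>j<n. msum n K W $$(j,i) = cnj(msum n K W $$(i,j))"
  proof (intro allI impI)
    fix i j assume ij: "i<n" "j<n"
    have a: "\<And>k. k < K \<Longrightarrow> W k $$(j,i) = cnj(W k $$(i,j))"
      using assms ij unfolding herm_iff by blast
    have "msum n K W $$(j,i) = (\<Sum>k<K. W k $$(j,i))" using ij by (simp add: msum_def)
    also have "\<dots> = (\<Sum>k<K. cnj (W k $$(i,j)))" using a by (intro sum.cong) auto
    also have "\<dots> = cnj(msum n K W $$(i,j))" using ij by (simp add: msum_def cnj_sum)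
    finally show "msum n K W $$(j,i) = cnj(msum n K W $$(i,j))" .
  qed
  then show ?thesis using msum_carrier unfolding herm_iff by blast
qed

lemma rank_outer: assumes "w \<in> carrier_vec n" shows "vec_space.rank n (outer w) \<le> 1"
  by (rule vec_space.rank_le_1_product_entries[where f = "\<lambda>i. w $ i" and g = "\<lambda>j. cnj (w $ j)"])
     (use assms in \<open>auto simp: outer_def\<close>)

lemma sdr_to_11:
  assumes hk: "\<forall>k<K. h k \<in> carrier_vec M" and G: "\<forall>k<K. \<Gamma> k > 0" and S: "\<forall>k<K. \<sigma>2 k > 0"
    and F: "feasSDR M K h \<Gamma> \<sigma>2 P0 W R"
    and ws_def: "ws = (\<lambda>k. complex_of_real (1 / sqrt (Re (cinner (h k) (W k *\<^sub>v h k)))) \<cdot>\<^sub>v (W k *\<^sub>v h k))"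
    and Rs_def: "Rs = R + msum M K W - msum M K (\<lambda>k. outer (ws k))"
  shows "feas11 M K h \<Gamma> \<sigma>2 P0 ws Rs \<and> msum M K (\<lambda>k. outer (ws k)) + Rs = msum M K W + R"
proof -
  have WH: "\<And>k. k<K \<Longrightarrow> hermitian M (W k)" and RH: "hermitian M R"
    and sinr: "\<And>k. k<K \<Longrightarrow> Re (mtrace (outer (h k) * W k)) / \<Gamma> k
              - (\<Sum>i\<in>{..<K} - {k}. Re (mtrace (outer (h k) * W i)))
              - Re (mtrace (outer (h k) * R)) \<ge> \<sigma>2 k"
    and pw: "(\<Sum>k<K. Re (mtrace (W k))) + Re (mtrace R) \<le> P0"
    and Rp: "psd M R" and Wp: "\<And>k. k<K \<Longrightarrow> psd M (W k)"
    using F unfolding feasSDR_def by blast+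
  have Wc: "\<And>k. k<K \<Longrightarrow> W k \<in> carrier_mat M M" using WH herm_carrier by blast
  have Rc: "R \<in> carrier_mat M M" using RH herm_carrier by blast
  have hc: "\<And>k. k<K \<Longrightarrow> h k \<in> carrier_vec M" using hk by blast
  define a where "a k i = Re (cinner (h k) (W i *\<^sub>v h k))" for k i
  have tr: "\<And>k i. k<K \<Longrightarrow> i<K \<Longrightarrow> Re (mtrace (outer (h k) * W i)) = a k i"
    unfolding a_def using mtrace_outer_mult hc Wc by metis
  have trR: "\<And>k. k<K \<Longrightarrow> Re (mtrace (outer (h k) * R)) = Re (cinner (h k) (R *\<^sub>v h k))"
    using mtrace_outer_mult hc Rc by metis
  have nn: "\<And>k i. k<K \<Longrightarrow> i<K \<Longrightarrow> 0 \<le> a k i"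
    unfolding a_def using Wp hc unfolding psd_def by blast
  have nnR: "\<And>k. k<K \<Longrightarrow> 0 \<le> Re (cinner (h k) (R *\<^sub>v h k))"
    using Rp hc unfolding psd_def by blast
  have sinr2: "\<And>k. k<K \<Longrightarrow> a k k / \<Gamma> k - (\<Sum>i\<in>{..<K} - {k}. a k i) - Re (cinner (h k) (R *\<^sub>v h k)) \<ge> \<sigma>2 k"
  proof -
    fix k assume k: "k<K"
    have "(\<Sum>i\<in>{..<K} - {k}. Re (mtrace (outer (h k) * W i))) = (\<Sum>i\<in>{..<K} - {k}. a k i)"
      using k tr by (intro sum.cong) auto
    then show "a k k / \<Gamma> k - (\<Sum>i\<in>{..<K} - {k}. a k i) - Re (cinner (h k) (R *\<^sub>v h k)) \<ge> \<sigma>2 k"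
      using sinr[OF k] tr[OF k k] trR[OF k] by simp
  qed
  have apos: "\<And>k. k<K \<Longrightarrow> 0 < a k k"
  proof -
    fix k assume k: "k<K"
    have "0 \<le> (\<Sum>i\<in>{..<K} - {k}. a k i)" using nn k by (intro sum_nonneg) auto
    then have "a k k / \<Gamma> k > 0" using sinr2[OF k] nnR[OF k] S k by force
    moreover have "\<Gamma> k > 0" using G k by blast
    ultimately show "0 < a k k" by (simp add: zero_less_divide_iff)
  qed
  define c where "c k = 1 / sqrt (a k k)" for k
  have ws_eq: "\<And>k. ws k = complex_of_real (c k) \<cdot>\<^sub>v (W k *\<^sub>v h k)" by (simp add: ws_def c_def a_def)
  have Whc: "\<And>k. k<K \<Longrightarrow> W k *\<^sub>v h k \<in> carrier_vec M" using Wc hc mult_mat_vec_carrier by blast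
  have wsc: "\<And>k. k<K \<Longrightarrow> ws k \<in> carrier_vec M" unfolding ws_eq using Whc by simp
  have Oc: "\<And>k. k<K \<Longrightarrow> outer (ws k) \<in> carrier_mat M M" using wsc outer_carrier by blast

  have inner_ws: "\<And>x k. k<K \<Longrightarrow> (x::complex vec) \<in> carrier_vec M \<Longrightarrow> cinner x (ws k) = complex_of_real (c k) * cinner x (W k *\<^sub>v h k)"
    unfolding ws_eq using Whc cinner_smult_right by blast
  have c2: "\<And>k. k<K \<Longrightarrow> (c k)\<^sup>2 = 1 / a k k"
    using apos unfolding c_def by (simp add: power_divide less_imp_le)
  have key: "\<And>x k. k<K \<Longrightarrow> (x::complex vec) \<in> carrier_vec M \<Longrightarrow> (cmod (cinner x (ws k)))\<^sup>2 \<le> Re (cinner x (W k *\<^sub>v x))"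
  proof -
    fix x :: "complex vec" and k assume k: "k<K" and x: "x \<in> carrier_vec M"
    have "(cmod (cinner x (ws k)))\<^sup>2 = (c k)\<^sup>2 * (cmod (cinner x (W k *\<^sub>v h k)))\<^sup>2"
      using inner_ws[OF k x] by (simp add: norm_mult power_mult_distrib)
    also have "cinner x (W k *\<^sub>v h k) = cnj (cinner (h k) (W k *\<^sub>v x))" by (rule herm_sym[OF WH[OF k] x hc[OF k]])
    also have "(c k)\<^sup>2 * (cmod (cnj (cinner (h k) (W k *\<^sub>v x))))\<^sup>2 = (cmod (cinner (h k) (W k *\<^sub>v x)))\<^sup>2 / a k k"
      using c2[OF k] by simp
    also have "\<dots> \<le> Re (cinner x (W k *\<^sub>v x))"
    proof -
      have "(cmod (cinner (h k) (W k *\<^sub>v x)))\<^sup>2 \<le> Re (cinner x (W k *\<^sub>v x)) * a k k"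
        using CS[OF Wp[OF k] x hc[OF k]] apos[OF k] unfolding a_def by blast
      then show ?thesis using apos[OF k] by (simp add: divide_le_eq)
    qed
    finally show "(cmod (cinner x (ws k)))\<^sup>2 \<le> Re (cinner x (W k *\<^sub>v x))" .
  qed
  have self: "\<And>k. k<K \<Longrightarrow> (cmod (cinner (h k) (ws k)))\<^sup>2 = a k k"
  proof -
    fix k assume k: "k<K"
    have e: "cinner (h k) (W k *\<^sub>v h k) = complex_of_real (a k k)"
      unfolding a_def by (rule herm_real[OF WH[OF k] hc[OF k]])
    have "(cmod (cinner (h k) (ws k)))\<^sup>2 = (c k)\<^sup>2 * (a k k)\<^sup>2"
      using inner_ws[OF k hc[OF k]] e apos[OF k] by (simp add: norm_mult power_mult_distrib)
    then show "(cmod (cinner (h k) (ws k)))\<^sup>2 = a k k" using c2[OF k] apos[OF k] by (simp add: power2_eq_square)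
  qed
  have RWc: "R + msum M K W \<in> carrier_mat M M" using Rc msum_carrier by simp
  have qfRs: "\<And>x::complex vec. x \<in> carrier_vec M \<Longrightarrow> Re (cinner x (Rs *\<^sub>v x)) =
      Re (cinner x (R *\<^sub>v x)) + (\<Sum>k<K. Re (cinner x (W k *\<^sub>v x)) - (cmod (cinner x (ws k)))\<^sup>2)"
  proof -
    fix x :: "complex vec" assume x: "x \<in> carrier_vec M"
    have "cinner x (Rs *\<^sub>v x) = cinner x ((R + msum M K W) *\<^sub>v x) - cinner x (msum M K (\<lambda>k. outer (ws k)) *\<^sub>v x)"
      unfolding Rs_def by (rule qf_minus[OF RWc msum_carrier x])
    also have "cinner x ((R + msum M K W) *\<^sub>v x) = cinner x (R *\<^sub>v x) + cinner x (msum M K W *\<^sub>v x)"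
      by (rule qf_add[OF Rc msum_carrier x])
    also have "cinner x (msum M K W *\<^sub>v x) = (\<Sum>k<K. cinner x (W k *\<^sub>v x))"
      by (rule qf_msum[OF Wc x])
    also have "cinner x (msum M K (\<lambda>k. outer (ws k)) *\<^sub>v x) = (\<Sum>k<K. cinner x (outer (ws k) *\<^sub>v x))"
      by (rule qf_msum[OF Oc x])
    also have "\<dots> = (\<Sum>k<K. complex_of_real ((cmod (cinner x (ws k)))\<^sup>2))"
      using qf_outer[OF wsc x] by (intro sum.cong) auto
    finally show "Re (cinner x (Rs *\<^sub>v x)) =
      Re (cinner x (R *\<^sub>v x)) + (\<Sum>k<K. Re (cinner x (W k *\<^sub>v x)) - (cmod (cinner x (ws k)))\<^sup>2)"
      by (simp add: Re_sum sum_subtractf del: of_real_power)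
  qed
  have RsH: "hermitian M Rs" unfolding Rs_def
    by (intro herm_minus herm_add RH herm_msum WH herm_outer wsc)
  have Rsp: "psd M Rs"
  proof -
    have "\<forall>x\<in>carrier_vec M. 0 \<le> Re (cinner x (Rs *\<^sub>v x))"
    proof
      fix x :: "complex vec" assume x: "x \<in> carrier_vec M"
      have "0 \<le> Re (cinner x (R *\<^sub>v x))" using Rp x unfolding psd_def by blast
      moreover have "0 \<le> (\<Sum>k<K. Re (cinner x (W k *\<^sub>v x)) - (cmod (cinner x (ws k)))\<^sup>2)"
        using key x by (intro sum_nonneg) auto
      ultimately show "0 \<le> Re (cinner x (Rs *\<^sub>v x))" using qfRs[OF x] by simp
    qed
    then show ?thesis using RsH unfolding psd_def by blast
  qed
  have sinr11: "\<forall>k<K. (cmod (cinner (h k) (ws k)))\<^sup>2 /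
        ((\<Sum>i\<in>{..<K} - {k}. (cmod (cinner (h k) (ws i)))\<^sup>2) + Re (cinner (h k) (Rs *\<^sub>v h k)) + \<sigma>2 k)
        \<ge> \<Gamma> k"
  proof (intro allI impI)
    fix k assume k: "k<K"
    define g where "g i = a k i - (cmod (cinner (h k) (ws i)))\<^sup>2" for i
    have "Re (cinner (h k) (Rs *\<^sub>v h k)) = Re (cinner (h k) (R *\<^sub>v h k)) + (\<Sum>i<K. g i)"
      unfolding g_def a_def by (rule qfRs[OF hc[OF k]])
    also have "(\<Sum>i<K. g i) = g k + (\<Sum>i\<in>{..<K} - {k}. g i)"
      using k by (subst sum.remove[of _ k]) auto
    also have "g k = 0" unfolding g_def using self[OF k] by simp
    also have "(\<Sum>i\<in>{..<K} - {k}. g i) = (\<Sum>i\<in>{..<K} - {k}. a k i) - (\<Sum>i\<in>{..<K} - {k}. (cmod (cinner (h k) (ws i)))\<^sup>2)"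
      unfolding g_def by (simp add: sum_subtractf)
    finally have D: "(\<Sum>i\<in>{..<K} - {k}. (cmod (cinner (h k) (ws i)))\<^sup>2) + Re (cinner (h k) (Rs *\<^sub>v h k)) + \<sigma>2 k
       = Re (cinner (h k) (R *\<^sub>v h k)) + (\<Sum>i\<in>{..<K} - {k}. a k i) + \<sigma>2 k" by simp
    define D where "D = Re (cinner (h k) (R *\<^sub>v h k)) + (\<Sum>i\<in>{..<K} - {k}. a k i) + \<sigma>2 k"
    have "0 \<le> (\<Sum>i\<in>{..<K} - {k}. a k i)" using nn k by (intro sum_nonneg) auto
    then have Dp: "D > 0" unfolding D_def using nnR[OF k] S k by force
    have "a k k / \<Gamma> k \<ge> D" unfolding D_def using sinr2[OF k] by simp
    then have "a k k \<ge> \<Gamma> k * D" using G k by (simp add: le_divide_eq mult.commute)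
    then have "a k k / D \<ge> \<Gamma> k" using Dp by (simp add: le_divide_eq)
    then show "(cmod (cinner (h k) (ws k)))\<^sup>2 /
        ((\<Sum>i\<in>{..<K} - {k}. (cmod (cinner (h k) (ws i)))\<^sup>2) + Re (cinner (h k) (Rs *\<^sub>v h k)) + \<sigma>2 k)
        \<ge> \<Gamma> k" unfolding D self[OF k] D_def .
  qed
  have pw11: "(\<Sum>k<K. vnorm2 (ws k)) + Re (mtrace Rs) \<le> P0"
  proof -
    have "mtrace Rs = mtrace (R + msum M K W) - mtrace (msum M K (\<lambda>k. outer (ws k)))"
      unfolding Rs_def by (rule mtrace_minus[OF RWc msum_carrier])
    also have "mtrace (R + msum M K W) = mtrace R + mtrace (msum M K W)"
      by (rule mtrace_add[OF Rc msum_carrier])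
    also have "mtrace (msum M K W) = (\<Sum>k<K. mtrace (W k))" by (rule mtrace_msum[OF Wc])
    also have "mtrace (msum M K (\<lambda>k. outer (ws k))) = (\<Sum>k<K. mtrace (outer (ws k)))" by (rule mtrace_msum[OF Oc])
    also have "\<dots> = (\<Sum>k<K. complex_of_real (vnorm2 (ws k)))" by (simp add: mtrace_outer)
    finally have "Re (mtrace Rs) = Re (mtrace R) + (\<Sum>k<K. Re (mtrace (W k))) - (\<Sum>k<K. vnorm2 (ws k))"
      by (simp add: Re_sum)
    then show ?thesis using pw by simp
  qed
  have eq: "msum M K (\<lambda>k. outer (ws k)) + Rs = msum M K W + R"
    unfolding Rs_def using Rc by (intro eq_matI) (auto simp: msum_def)
  show ?thesis unfolding feas11_def using wsc RH sinr11 pw11 Rsp RsH eq by blast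
qed

lemma f11_to_12:
  assumes hk: "\<forall>k<K. h k \<in> carrier_vec M" and G: "\<forall>k<K. \<Gamma> k > 0" and S: "\<forall>k<K. \<sigma>2 k > 0"
    and F: "feas11 M K h \<Gamma> \<sigma>2 P0 w R"
  shows "feas12 M K h \<Gamma> \<sigma>2 P0 (\<lambda>k. outer (w k)) R"
proof -
  have wc: "\<And>k. k<K \<Longrightarrow> w k \<in> carrier_vec M" and RH: "hermitian M R"
    and sinr: "\<And>k. k<K \<Longrightarrow> (cmod (cinner (h k) (w k)))\<^sup>2 /
        ((\<Sum>i\<in>{..<K} - {k}. (cmod (cinner (h k) (w i)))\<^sup>2) + Re (cinner (h k) (R *\<^sub>v h k)) + \<sigma>2 k)
        \<ge> \<Gamma> k"
    and pw: "(\<Sum>k<K. vnorm2 (w k)) + Re (mtrace R) \<le> P0"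
    and Rp: "psd M R"
    using F unfolding feas11_def by blast+
  have Rc: "R \<in> carrier_mat M M" using RH herm_carrier by blast
  have hc: "\<And>k. k<K \<Longrightarrow> h k \<in> carrier_vec M" using hk by blast
  have Oc: "\<And>k. k<K \<Longrightarrow> outer (w k) \<in> carrier_mat M M" using wc outer_carrier by blast
  have tr: "\<And>k i. k<K \<Longrightarrow> i<K \<Longrightarrow> Re (mtrace (outer (h k) * outer (w i))) = (cmod (cinner (h k) (w i)))\<^sup>2"
  proof -
    fix k i assume k: "k<K" and i: "i<K"
    have "mtrace (outer (h k) * outer (w i)) = cinner (h k) (outer (w i) *\<^sub>v h k)"
      by (rule mtrace_outer_mult[OF hc[OF k] Oc[OF i]])
    also have "\<dots> = complex_of_real ((cmod (cinner (h k) (w i)))\<^sup>2)" by (rule qf_outer[OF wc[OF i] hc[OF k]])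
    finally show "Re (mtrace (outer (h k) * outer (w i))) = (cmod (cinner (h k) (w i)))\<^sup>2"
      by (simp del: of_real_power)
  qed
  have trR: "\<And>k. k<K \<Longrightarrow> Re (mtrace (outer (h k) * R)) = Re (cinner (h k) (R *\<^sub>v h k))"
    using mtrace_outer_mult hc Rc by metis
  have nnR: "\<And>k. k<K \<Longrightarrow> 0 \<le> Re (cinner (h k) (R *\<^sub>v h k))"
    using Rp hc unfolding psd_def by blast
  have sinr12: "\<forall>k<K. Re (mtrace (outer (h k) * outer (w k))) / \<Gamma> k
              - (\<Sum>i\<in>{..<K} - {k}. Re (mtrace (outer (h k) * outer (w i))))
              - Re (mtrace (outer (h k) * R)) \<ge> \<sigma>2 k"
  proof (intro allI impI)
    fix k assume k: "k<K"
    have s: "(\<Sum>i\<in>{..<K} - {k}. Re (mtrace (outer (h k) * outer (w i)))) = (\<Sum>i\<in>{..<K} - {k}. (cmod (cinner (h k) (w i)))\<^sup>2)"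
      using k tr by (intro sum.cong) auto
    define D where "D = (\<Sum>i\<in>{..<K} - {k}. (cmod (cinner (h k) (w i)))\<^sup>2) + Re (cinner (h k) (R *\<^sub>v h k)) + \<sigma>2 k"
    have "0 \<le> (\<Sum>i\<in>{..<K} - {k}. (cmod (cinner (h k) (w i)))\<^sup>2)" by (intro sum_nonneg) auto
    then have Dp: "D > 0" unfolding D_def using nnR[OF k] S k by force
    have Gk: "\<Gamma> k > 0" using G k by blast
    have "(cmod (cinner (h k) (w k)))\<^sup>2 / D \<ge> \<Gamma> k" using sinr[OF k] unfolding D_def .
    then have "(cmod (cinner (h k) (w k)))\<^sup>2 \<ge> \<Gamma> k * D" using Dp by (simp add: le_divide_eq)
    then have "(cmod (cinner (h k) (w k)))\<^sup>2 / \<Gamma> k \<ge> D" using Gk by (simp add: le_divide_eq mult.commute)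
    then show "Re (mtrace (outer (h k) * outer (w k))) / \<Gamma> k
              - (\<Sum>i\<in>{..<K} - {k}. Re (mtrace (outer (h k) * outer (w i))))
              - Re (mtrace (outer (h k) * R)) \<ge> \<sigma>2 k"
      unfolding s tr[OF k k] trR[OF k] D_def by simp
  qed
  have pw12: "(\<Sum>k<K. Re (mtrace (outer (w k)))) + Re (mtrace R) \<le> P0"
    using pw by (simp add: mtrace_outer)
  have H: "\<forall>k<K. hermitian M (outer (w k))" using wc herm_outer by blast
  have P: "\<forall>k<K. psd M (outer (w k))" using wc psd_outer by blast
  have rk: "\<forall>k<K. vec_space.rank M (outer (w k)) \<le> 1" using wc rank_outer by blast
  show ?thesis unfolding feas12_def feasSDR_def using H RH sinr12 pw12 Rp P rk by blast
qed

theorem proposition1: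
  fixes M N K :: nat and G :: "complex mat" and h :: "nat \<Rightarrow> complex vec"
    and P0 :: real and \<Gamma> \<sigma>2 :: "nat \<Rightarrow> real"
  assumes "M \<ge> 1" and "N \<ge> 1" and "K \<ge> 1"
    and "G \<in> carrier_mat N M"
    and "\<forall>k<K. h k \<in> carrier_vec M"
    and "P0 > 0"
    and "\<forall>k<K. \<Gamma> k > 0" and "\<forall>k<K. \<sigma>2 k > 0"
  shows "val11 M K G h \<Gamma> \<sigma>2 P0 = val12 M K G h \<Gamma> \<sigma>2 P0
    \<and> val12 M K G h \<Gamma> \<sigma>2 P0 = valSDR M K G h \<Gamma> \<sigma>2 P0
    \<and> (\<forall>Wt Rt. feasSDR M K h \<Gamma> \<sigma>2 P0 Wt Rt \<and> obj12 M K G Wt Rt = valSDR M K G h \<Gamma> \<sigma>2 P0 \<longrightarrow>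
         (let ws = (\<lambda>k. complex_of_real (1 / sqrt (Re (cinner (h k) (Wt k *\<^sub>v h k)))) \<cdot>\<^sub>v (Wt k *\<^sub>v h k));
              Rs = Rt + msum M K Wt - msum M K (\<lambda>k. outer (ws k))
          in feas11 M K h \<Gamma> \<sigma>2 P0 ws Rs \<and> obj11 M K G ws Rs = val11 M K G h \<Gamma> \<sigma>2 P0))"
proof -
  note hk = assms(5) and Gm = assms(7) and Sg = assms(8)
  define WS where "WS Wt = (\<lambda>k. complex_of_real (1 / sqrt (Re (cinner (h k) (Wt k *\<^sub>v h k)))) \<cdot>\<^sub>v (Wt k *\<^sub>v h k))" for Wt
  define RS where "RS Wt Rt = Rt + msum M K Wt - msum M K (\<lambda>k. outer (WS Wt k))" for Wt Rt
  have conv: "feas11 M K h \<Gamma> \<sigma>2 P0 (WS Wt) (RS Wt Rt) \<and> obj11 M K G (WS Wt) (RS Wt Rt) = obj12 M K G Wt Rt"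
    if "feasSDR M K h \<Gamma> \<sigma>2 P0 Wt Rt" for Wt Rt
  proof -
    have "feas11 M K h \<Gamma> \<sigma>2 P0 (WS Wt) (RS Wt Rt) \<and> msum M K (\<lambda>k. outer (WS Wt k)) + RS Wt Rt = msum M K Wt + Rt"
      by (rule sdr_to_11[OF hk Gm Sg that]) (simp_all add: WS_def RS_def)
    then show ?thesis by (simp add: obj11_def obj12_def)
  qed
  have le1: "val11 M K G h \<Gamma> \<sigma>2 P0 \<le> valSDR M K G h \<Gamma> \<sigma>2 P0"
    unfolding valSDR_def
  proof (rule INF_greatest)
    fix p assume "p \<in> {(W, R0). feasSDR M K h \<Gamma> \<sigma>2 P0 W R0}"
    then have f: "feasSDR M K h \<Gamma> \<sigma>2 P0 (fst p) (snd p)" by auto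
    have "val11 M K G h \<Gamma> \<sigma>2 P0 \<le> obj11 M K G (WS (fst p)) (RS (fst p) (snd p))"
      unfolding val11_def using conv[OF f]
      by (intro INF_lower2[of "(WS (fst p), RS (fst p) (snd p))"]) auto
    then show "val11 M K G h \<Gamma> \<sigma>2 P0 \<le> obj12 M K G (fst p) (snd p)" using conv[OF f] by simp
  qed
  have le2: "val12 M K G h \<Gamma> \<sigma>2 P0 \<le> val11 M K G h \<Gamma> \<sigma>2 P0"
    unfolding val11_def
  proof (rule INF_greatest)
    fix p assume "p \<in> {(w, R0). feas11 M K h \<Gamma> \<sigma>2 P0 w R0}"
    then have f: "feas11 M K h \<Gamma> \<sigma>2 P0 (fst p) (snd p)" by auto
    have "val12 M K G h \<Gamma> \<sigma>2 P0 \<le> obj12 M K G (\<lambda>k. outer (fst p k)) (snd p)"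
      unfolding val12_def using f11_to_12[OF hk Gm Sg f]
      by (intro INF_lower2[of "(\<lambda>k. outer (fst p k), snd p)"]) auto
    then show "val12 M K G h \<Gamma> \<sigma>2 P0 \<le> obj11 M K G (fst p) (snd p)" by (simp add: obj11_def obj12_def)
  qed
  have le3: "valSDR M K G h \<Gamma> \<sigma>2 P0 \<le> val12 M K G h \<Gamma> \<sigma>2 P0"
    unfolding valSDR_def val12_def
    by (rule INF_superset_mono) (auto simp: feas12_def)
  have e1: "val11 M K G h \<Gamma> \<sigma>2 P0 = val12 M K G h \<Gamma> \<sigma>2 P0" using le1 le2 le3 by simp
  have e2: "val12 M K G h \<Gamma> \<sigma>2 P0 = valSDR M K G h \<Gamma> \<sigma>2 P0" using le1 le2 le3 by simp
  have e3: "\<forall>Wt Rt. feasSDR M K h \<Gamma> \<sigma>2 P0 Wt Rt \<and> obj12 M K G Wt Rt = valSDR M K G h \<Gamma> \<sigma>2 P0 \<longrightarrow>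
         (let ws = WS Wt; Rs = RS Wt Rt
          in feas11 M K h \<Gamma> \<sigma>2 P0 ws Rs \<and> obj11 M K G ws Rs = val11 M K G h \<Gamma> \<sigma>2 P0)"
  proof (intro allI impI)
    fix Wt Rt assume a: "feasSDR M K h \<Gamma> \<sigma>2 P0 Wt Rt \<and> obj12 M K G Wt Rt = valSDR M K G h \<Gamma> \<sigma>2 P0"
    then show "let ws = WS Wt; Rs = RS Wt Rt
          in feas11 M K h \<Gamma> \<sigma>2 P0 ws Rs \<and> obj11 M K G ws Rs = val11 M K G h \<Gamma> \<sigma>2 P0"
      using conv[of Wt Rt] e1 e2 by (simp add: Let_def)
  qed
  show ?thesis using e1 e2 e3 unfolding WS_def RS_def by simp
qed

end
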